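(* For every $\theta\in\mathbb R$, the operator $\widetilde U_\theta$ maps $\widetilde{\mathcal H}$ into itself and is unitary on $\widetilde{\mathcal H}$: $\widetilde U_\theta\widetilde U_\theta^*=\widetilde U_\theta^*\widetilde U_\theta=\mathbb 1$.
   Context: Let $\Bbbk\geq3$ and $\mathcal H=(\mathbb C^2)^{\otimes\Bbbk}$ with orthonormal basis $|\mathrm x\rangle=|\mathrm x_1\rangle\otimes\cdots\otimes|\mathrm x_\Bbbk\rangle$, $\mathrm x_i\in\{0,1\}$. For $j\in\{0,1\}$, $P_{[\![j]\!]}$ is the orthogonal projection onto the span of the $|\mathrm x\rangle$ with $\mathrm x_1=j$. Let $\mathbf U$ be a $2\times2$ unitary matrix all of whose entries have modulus $2^{-1/2}$, and define the unitary $\bar U$ on $\mathcal H$ by $\bar U|\mathrm x\rangle=|\mathrm x_2\rangle\otimes\cdots\otimes|\mathrm x_\Bbbk\rangle\otimes\mathbf U|\mathrm x_1\rangle$. Let $\sigma$ be the unitary exchanging the last two tensor factors: $\sigma(|\mathrm x_1\rangle\otimes\cdots\otimes|\mathrm x_{\Bbbk-1}\rangle\otimes|\mathrm x_\Bbbk\rangle)=|\mathrm x_1\rangle\otimes\cdots\otimes|\mathrm x_\Bbbk\rangle\otimes|\mathrm x_{\Bbbk-1}\rangle$. Put $P'_{[\![j]\!]}=\bar UP_{[\![j]\!]}\bar U^*$. The tower Hilbert space is $\widetilde{\mathcal H}=\mathcal H\oplus P'_{[\![1]\!]}\mathcal H$ with scalar product $\langle(\phi_0,\phi_1),(\phi_0',\phi_1')\rangle=\langle\phi_0,\phi_0'\rangle+\langle\phi_1,\phi_1'\rangle$,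 and for $\theta\in\mathbb R$, $\widetilde U_\theta(\phi_0,\phi_1)=\big(\sigma\bar U P'_{[\![1]\!]}\phi_1+\bar UP_{[\![0]\!]}\phi_0,\ e^{i\theta}\bar UP_{[\![1]\!]}\phi_0\big)$. *)

theory Defs
  imports Complex_Main
begin

text \<open>Basis labels of (C^2)^{\<otimes>k}: bit strings of length k (True = 1, False = 0).
  Operators are given by their matrix kernels K y x = <y|K|x>.\<close>

definition bits :: "nat \<Rightarrow> bool list set" where
  "bits k = {xs. length xs = k}"

definition Hsp :: "nat \<Rightarrow> (bool list \<Rightarrow> complex) set" where
  "Hsp k = {f. \<forall>x. length x \<noteq> k \<longrightarrow> f x = 0}"

definition inner_H :: "nat \<Rightarrow> (bool list \<Rightarrow> complex) \<Rightarrow> (bool list \<Rightarrow> complex) \<Rightarrow> complex" where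
  "inner_H k f g = (\<Sum>x\<in>bits k. cnj (f x) * g x)"

type_synonym kernel = "bool list \<Rightarrow> bool list \<Rightarrow> complex"

definition app :: "nat \<Rightarrow> kernel \<Rightarrow> (bool list \<Rightarrow> complex) \<Rightarrow> (bool list \<Rightarrow> complex)" where
  "app k K f = (\<lambda>y. if length y = k then (\<Sum>x\<in>bits k. K y x * f x) else 0)"

definition kcomp :: "nat \<Rightarrow> kernel \<Rightarrow> kernel \<Rightarrow> kernel" where
  "kcomp k K L = (\<lambda>y x. \<Sum>z\<in>bits k. K y z * L z x)"

definition kadj :: "kernel \<Rightarrow> kernel" where
  "kadj K = (\<lambda>y x. cnj (K x y))"

definition Pj :: "bool \<Rightarrow> kernel" where
  "Pj j = (\<lambda>y x. if y = x \<and> hd x = j then 1 else 0)"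

text \<open>Ubar |x1 x2 ... xk> = |x2 ... xk> \<otimes> U|x1> = sum_b U(b,x1) |x2 ... xk b>.\<close>
definition Ubar :: "(bool \<Rightarrow> bool \<Rightarrow> complex) \<Rightarrow> kernel" where
  "Ubar u = (\<lambda>y x. if butlast y = tl x then u (last y) (hd x) else 0)"

definition swap_last2 :: "bool list \<Rightarrow> bool list" where
  "swap_last2 xs = butlast (butlast xs) @ [last xs, last (butlast xs)]"

definition sigma :: kernel where
  "sigma = (\<lambda>y x. if y = swap_last2 x then 1 else 0)"

definition Pj' :: "nat \<Rightarrow> (bool \<Rightarrow> bool \<Rightarrow> complex) \<Rightarrow> bool \<Rightarrow> kernel" where
  "Pj' k u j = kcomp k (Ubar u) (kcomp k (Pj j) (kadj (Ubar u)))"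

definition Htower :: "nat \<Rightarrow> (bool \<Rightarrow> bool \<Rightarrow> complex) \<Rightarrow>
    ((bool list \<Rightarrow> complex) \<times> (bool list \<Rightarrow> complex)) set" where
  "Htower k u = {(\<phi>0, \<phi>1). \<phi>0 \<in> Hsp k \<and> (\<exists>\<psi>\<in>Hsp k. \<phi>1 = app k (Pj' k u True) \<psi>)}"

definition inner_T :: "nat \<Rightarrow> (bool list \<Rightarrow> complex) \<times> (bool list \<Rightarrow> complex) \<Rightarrow>
    (bool list \<Rightarrow> complex) \<times> (bool list \<Rightarrow> complex) \<Rightarrow> complex" where
  "inner_T k p q = inner_H k (fst p) (fst q) + inner_H k (snd p) (snd q)"

definition Utower :: "nat \<Rightarrow> (bool \<Rightarrow> bool \<Rightarrow> complex) \<Rightarrow> real \<Rightarrow>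
    (bool list \<Rightarrow> complex) \<times> (bool list \<Rightarrow> complex) \<Rightarrow>
    (bool list \<Rightarrow> complex) \<times> (bool list \<Rightarrow> complex)" where
  "Utower k u \<theta> p =
     ((\<lambda>y. app k sigma (app k (Ubar u) (app k (Pj' k u True) (snd p))) y
           + app k (Ubar u) (app k (Pj False) (fst p)) y),
      (\<lambda>y. exp (\<i> * of_real \<theta>) * app k (Ubar u) (app k (Pj True) (fst p)) y))"

end

theory Submission imports Defs begin

lemma bits_finite[simp]: "finite (bits n)"
proof -
  have "bits n \<subseteq> {xs. set xs \<subseteq> UNIV \<and> length xs = n}" by (auto simp: bits_def)
  moreover have "finite {xs. set xs \<subseteq> (UNIV::bool set) \<and> length xs = n}"
    by (rule finite_lists_length_eq) simp
  ultimately show ?thesis by (rule finite_subset)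
qed

lemma bits_Suc_cons: "bits (Suc n) = (\<lambda>(a,w). a#w) ` (UNIV \<times> bits n)"
  by (auto simp: bits_def image_iff length_Suc_conv)

lemma bits_Suc_snoc: "bits (Suc n) = (\<lambda>(w,b). w@[b]) ` (bits n \<times> UNIV)"
proof -
  have "\<And>x. length x = Suc n \<Longrightarrow> \<exists>w b. x = w@[b] \<and> length w = n"
    by (metis append_butlast_last_id length_butlast diff_Suc_1 list.size(3) nat.distinct(1))
  thus ?thesis by (force simp: bits_def image_iff)
qed

lemma sum_bits_cons: "(\<Sum>x\<in>bits (Suc n). F x) = (\<Sum>a\<in>UNIV. \<Sum>w\<in>bits n. F (a#w))"
proof -
  have "(\<Sum>x\<in>bits (Suc n). F x) = (\<Sum>(a,w)\<in>UNIV \<times> bits n. F (a # w))"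
    unfolding bits_Suc_cons by (subst sum.reindex) (auto simp: inj_on_def intro!: sum.cong split: prod.splits)
  also have "\<dots> = (\<Sum>a\<in>UNIV. \<Sum>w\<in>bits n. F (a#w))"
    by (simp add: sum.cartesian_product)
  finally show ?thesis .
qed

lemma sum_bits_snoc: "(\<Sum>x\<in>bits (Suc n). F x) = (\<Sum>w\<in>bits n. \<Sum>b\<in>UNIV. F (w@[b]))"
proof -
  have "(\<Sum>x\<in>bits (Suc n). F x) = (\<Sum>(w,b)\<in>bits n \<times> UNIV. F (w @ [b]))"
    unfolding bits_Suc_snoc by (subst sum.reindex) (auto simp: inj_on_def intro!: sum.cong split: prod.splits)
  also have "\<dots> = (\<Sum>w\<in>bits n. \<Sum>b\<in>UNIV. F (w@[b]))"
    by (simp add: sum.cartesian_product)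
  finally show ?thesis .
qed

lemma A_pt:
  assumes "length y = Suc n"
  shows "app (Suc n) (Ubar u) f y = (\<Sum>a\<in>UNIV. u (last y) a * f (a # butlast y))"
proof -
  have m: "butlast y \<in> bits n" using assms by (simp add: bits_def)
  have "app (Suc n) (Ubar u) f y = (\<Sum>x\<in>bits (Suc n). (if butlast y = tl x then u (last y) (hd x) else 0) * f x)"
    using assms by (simp add: app_def Ubar_def)
  also have "\<dots> = (\<Sum>a\<in>UNIV. \<Sum>w\<in>bits n. if w = butlast y then u (last y) a * f (a # butlast y) else 0)"
    unfolding sum_bits_cons by (intro sum.cong refl) auto
  also have "\<dots> = (\<Sum>a\<in>UNIV. u (last y) a * f (a # butlast y))"
    using m by simp
  finally show ?thesis .
qed

lemma B_pt:
  assumes "length y = Suc n"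
  shows "app (Suc n) (kadj (Ubar u)) f y = (\<Sum>b\<in>UNIV. cnj (u b (hd y)) * f (tl y @ [b]))"
proof -
  have m: "tl y \<in> bits n" using assms by (simp add: bits_def)
  have "app (Suc n) (kadj (Ubar u)) f y = (\<Sum>x\<in>bits (Suc n). cnj (if butlast x = tl y then u (last x) (hd y) else 0) * f x)"
    using assms by (simp add: app_def Ubar_def kadj_def)
  also have "\<dots> = (\<Sum>b\<in>UNIV. \<Sum>w\<in>bits n. if w = tl y then cnj (u b (hd y)) * f (tl y@[b]) else 0)"
    unfolding sum_bits_snoc by (subst sum.swap) (intro sum.cong refl; auto)
  also have "\<dots> = (\<Sum>b\<in>UNIV. cnj (u b (hd y)) * f (tl y @ [b]))"
    using m by simp
  finally show ?thesis .
qed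

lemma P_pt:
  assumes "length y = k"
  shows "app k (Pj j) f y = (if hd y = j then f y else 0)"
proof -
  have m: "y \<in> bits k" using assms by (simp add: bits_def)
  have "app k (Pj j) f y = (\<Sum>x\<in>bits k. (if y = x \<and> hd x = j then 1 else 0) * f x)"
    using assms by (simp add: app_def Pj_def)
  also have "\<dots> = (\<Sum>x\<in>bits k. if y = x then (if hd y = j then f y else 0) else 0)"
    by (intro sum.cong refl) auto
  finally show ?thesis using m by simp
qed

lemma swap_snoc2[simp]: "swap_last2 (ys @ [a,b]) = ys @ [b,a]"
  by (simp add: swap_last2_def butlast_append)

lemma swap_snoc3[simp]: "swap_last2 (ys @ [x,a,b]) = ys @ [x,b,a]"
  using swap_snoc2[of "ys @ [x]" a b] by simp

lemma len_ge2: "length xs \<ge> 2 \<Longrightarrow> \<exists>ys a b. xs = ys @ [a,b]"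
  by (metis One_nat_def Suc_1 append.assoc append_Cons append_butlast_last_id append_self_conv2 le_zero_eq length_0_conv length_butlast not_less_eq_eq diff_is_0_eq nat.distinct(1) numeral_2_eq_2 zero_neq_numeral)

lemma swap_inv: "length xs \<ge> 2 \<Longrightarrow> swap_last2 (swap_last2 xs) = xs"
  using len_ge2 by force

lemma swap_len: "length xs \<ge> 2 \<Longrightarrow> length (swap_last2 xs) = length xs"
  using len_ge2 by force

lemma S_pt:
  assumes "length y = k" "k \<ge> 2"
  shows "app k sigma f y = f (swap_last2 y)"
proof -
  have m: "swap_last2 y \<in> bits k" using assms by (simp add: bits_def swap_len)
  have "app k sigma f y = (\<Sum>x\<in>bits k. (if y = swap_last2 x then 1 else 0) * f x)"
    using assms by (simp add: app_def sigma_def)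
  also have "\<dots> = (\<Sum>x\<in>bits k. if x = swap_last2 y then f (swap_last2 y) else 0)"
    using assms by (intro sum.cong refl) (auto simp: bits_def swap_inv swap_len)
  finally show ?thesis using m by simp
qed


lemma app_in[simp]: "app k K f \<in> Hsp k"
  by (simp add: app_def Hsp_def)

lemma Hsp_eqI:
  assumes a: "f \<in> Hsp k" "g \<in> Hsp k" "\<And>y. length y = k \<Longrightarrow> f y = g y"
  shows "f = g"
proof (rule ext)
  fix x
  show "f x = g x" using a by (cases "length x = k") (auto simp: Hsp_def)
qed

lemma app_off[simp]: "length x \<noteq> k \<Longrightarrow> app k K f x = 0"
  by (simp add: app_def)

lemma app_cong: "(\<And>x. length x = k \<Longrightarrow> f x = g x) \<Longrightarrow> app k K f = app k K g"
  unfolding app_def by (intro ext if_cong refl sum.cong) (auto simp: bits_def)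

lemma app_add: "app k K (\<lambda>y. f y + g y) = (\<lambda>y. app k K f y + app k K g y)"
  by (auto simp: app_def sum.distrib algebra_simps)

lemma app_scale: "app k K (\<lambda>y. c * f y) = (\<lambda>y. c * app k K f y)"
  by (auto simp: app_def sum_distrib_left algebra_simps)

lemma app_zero: "app k K (\<lambda>y. 0) = (\<lambda>y. 0)"
  by (auto simp: app_def)

lemma app_comp: "app k (kcomp k K L) f = app k K (app k L f)"
proof (rule ext)
  fix y
  show "app k (kcomp k K L) f y = app k K (app k L f) y"
  proof (cases "length y = k")
    case True
    have "app k (kcomp k K L) f y = (\<Sum>x\<in>bits k. \<Sum>z\<in>bits k. K y z * L z x * f x)"
      using True by (simp add: app_def kcomp_def sum_distrib_right)
    also have "\<dots> = (\<Sum>z\<in>bits k. K y z * (\<Sum>x\<in>bits k. L z x * f x))"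
      by (subst sum.swap) (simp add: sum_distrib_left mult.assoc)
    also have "\<dots> = app k K (app k L f) y"
      using True by (simp add: app_def bits_def)
    finally show ?thesis .
  qed (simp add: app_def)
qed

lemma inner_adj: "inner_H k (app k K f) g = inner_H k f (app k (kadj K) g)"
proof -
  have "inner_H k (app k K f) g = (\<Sum>y\<in>bits k. \<Sum>x\<in>bits k. cnj (K y x) * cnj (f x) * g y)"
    by (simp add: inner_H_def app_def bits_def sum_distrib_right)
  also have "\<dots> = (\<Sum>x\<in>bits k. cnj (f x) * (\<Sum>y\<in>bits k. cnj (K y x) * g y))"
    by (subst sum.swap) (simp add: sum_distrib_left algebra_simps)
  also have "\<dots> = inner_H k f (app k (kadj K) g)"
    by (simp add: inner_H_def app_def bits_def kadj_def)
  finally show ?thesis .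
qed

lemma kadj_kadj[simp]: "kadj (kadj K) = K" by (simp add: kadj_def)

lemma kadj_Pj[simp]: "kadj (Pj j) = Pj j" by (auto simp: kadj_def Pj_def fun_eq_iff)

lemma inner_addL: "inner_H k (\<lambda>y. f y + g y) h = inner_H k f h + inner_H k g h"
  by (simp add: inner_H_def sum.distrib algebra_simps)
lemma inner_addR: "inner_H k h (\<lambda>y. f y + g y) = inner_H k h f + inner_H k h g"
  by (simp add: inner_H_def sum.distrib algebra_simps)
lemma inner_scaleL: "inner_H k (\<lambda>y. c * f y) h = cnj c * inner_H k f h"
  by (simp add: inner_H_def sum_distrib_left algebra_simps)
lemma inner_scaleR: "inner_H k h (\<lambda>y. c * f y) = c * inner_H k h f"
  by (simp add: inner_H_def sum_distrib_left algebra_simps)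
lemma inner_zeroL: "inner_H k (\<lambda>y. 0) h = 0"
  by (simp add: inner_H_def)

lemma Sadj_pt:
  assumes "length y = k" "k \<ge> 2"
  shows "app k (kadj sigma) f y = f (swap_last2 y)"
proof -
  have m: "swap_last2 y \<in> bits k" using assms by (simp add: bits_def swap_len)
  have "app k (kadj sigma) f y = (\<Sum>x\<in>bits k. (if x = swap_last2 y then 1 else 0) * f x)"
    using assms unfolding app_def sigma_def kadj_def by simp (intro sum.cong refl; simp)
  also have "\<dots> = (\<Sum>x\<in>bits k. if x = swap_last2 y then f (swap_last2 y) else 0)"
    by (intro sum.cong refl) auto
  finally show ?thesis using m by simp
qed

lemma Sadj: "k \<ge> 2 \<Longrightarrow> app k (kadj sigma) f = app k sigma f"
  by (rule Hsp_eqI[where k=k]) (auto simp: Sadj_pt S_pt)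

lemma SS: "k \<ge> 2 \<Longrightarrow> f \<in> Hsp k \<Longrightarrow> app k sigma (app k sigma f) = f"
  by (rule Hsp_eqI[where k=k]) (auto simp: S_pt swap_len swap_inv)

lemma Psum: "f \<in> Hsp k \<Longrightarrow> (\<lambda>y. app k (Pj False) f y + app k (Pj True) f y) = f"
  by (rule Hsp_eqI[where k=k]) (auto simp: P_pt Hsp_def)

lemma PP: "app k (Pj i) (app k (Pj j) f) = (if i = j then app k (Pj j) f else (\<lambda>y. 0))"
  by (rule Hsp_eqI[where k=k]) (auto simp: P_pt Hsp_def)

lemma bool_sum: "(\<Sum>b\<in>(UNIV::bool set). g b) = g False + g True"
  by (simp add: UNIV_bool)


lemma AB:
  assumes U2: "\<And>i j. (\<Sum>b\<in>UNIV. u i b * cnj (u j b)) = (if i = j then 1 else 0)"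
    and f: "f \<in> Hsp (Suc m)"
  shows "app (Suc m) (Ubar u) (app (Suc m) (kadj (Ubar u)) f) = f"
proof (rule Hsp_eqI[where k="Suc m"])
  fix y :: "bool list" assume y: "length y = Suc m"
  hence yy: "butlast y @ [last y] = y" by (metis append_butlast_last_id list.size(3) nat.distinct(1))
  have "app (Suc m) (Ubar u) (app (Suc m) (kadj (Ubar u)) f) y
     = (\<Sum>a\<in>UNIV. u (last y) a * (\<Sum>b\<in>UNIV. cnj (u b a) * f (butlast y @ [b])))"
    using y by (simp add: A_pt B_pt)
  also have "\<dots> = (\<Sum>b\<in>UNIV. (\<Sum>a\<in>UNIV. u (last y) a * cnj (u b a)) * f (butlast y @ [b]))"
    by (simp add: sum_distrib_left sum_distrib_right algebra_simps) (rule sum.swap)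
  also have "\<dots> = f y" using yy by (cases "last y") (simp_all add: U2 bool_sum)
  finally show "app (Suc m) (Ubar u) (app (Suc m) (kadj (Ubar u)) f) y = f y" .
qed (use f in auto)

lemma BA:
  assumes U3: "\<And>i j. (\<Sum>b\<in>UNIV. cnj (u b i) * u b j) = (if i = j then 1 else 0)"
    and f: "f \<in> Hsp (Suc m)"
  shows "app (Suc m) (kadj (Ubar u)) (app (Suc m) (Ubar u) f) = f"
proof (rule Hsp_eqI[where k="Suc m"])
  fix y :: "bool list" assume y: "length y = Suc m"
  hence yy: "hd y # tl y = y" by (metis list.collapse list.size(3) nat.distinct(1))
  have "app (Suc m) (kadj (Ubar u)) (app (Suc m) (Ubar u) f) y
     = (\<Sum>b\<in>UNIV. cnj (u b (hd y)) * (\<Sum>a\<in>UNIV. u b a * f (a # tl y)))"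
    using y by (simp add: A_pt B_pt)
  also have "\<dots> = (\<Sum>a\<in>UNIV. (\<Sum>b\<in>UNIV. cnj (u b (hd y)) * u b a) * f (a # tl y))"
    by (simp add: sum_distrib_left sum_distrib_right algebra_simps) (rule sum.swap)
  also have "\<dots> = f y" using yy by (cases "hd y") (simp_all add: U3 bool_sum)
  finally show "app (Suc m) (kadj (Ubar u)) (app (Suc m) (Ubar u) f) y = f y" .
qed (use f in auto)

lemma K5a:
  fixes n :: nat
  assumes U3: "\<And>i j. (\<Sum>b\<in>UNIV. cnj (u b i) * u b j) = (if i = j then 1 else 0)"
  defines "k \<equiv> Suc (Suc (Suc n))"
  shows "app k (Pj False) (app k (kadj (Ubar u)) (app k sigma (app k (Ubar u) (app k (Ubar u) (app k (Pj True) g))))) = (\<lambda>y. 0)"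
proof (rule Hsp_eqI[where k=k])
  fix y :: "bool list" assume y: "length y = k"
  show "app k (Pj False) (app k (kadj (Ubar u)) (app k sigma (app k (Ubar u) (app k (Ubar u) (app k (Pj True) g))))) y = 0"
  proof (cases "hd y")
    case True thus ?thesis using y by (simp add: P_pt)
  next
    case False
    obtain v d where yv: "y = False # v @ [d]" and lv: "length v = Suc n"
      using y False unfolding k_def
      by (metis (full_types) append_butlast_last_id length_butlast length_tl list.collapse list.sel(3) list.size(3) diff_Suc_1 nat.distinct(1) tl_append2 butlast_tl)
    have "app k (Pj False) (app k (kadj (Ubar u)) (app k sigma (app k (Ubar u) (app k (Ubar u) (app k (Pj True) g))))) y
      = (\<Sum>b\<in>UNIV. cnj (u b False) * (\<Sum>a\<in>UNIV. u d a * (\<Sum>e\<in>UNIV. u b e * (if e then g (e # a # v) else 0))))"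
      using lv unfolding yv k_def by (simp add: P_pt B_pt S_pt A_pt butlast_append)
    also have "\<dots> = (\<Sum>b\<in>UNIV. cnj (u b False) * u b True) * (\<Sum>a\<in>UNIV. u d a * g (True # a # v))"
      by (simp add: bool_sum algebra_simps)
    also have "\<dots> = 0" by (simp add: U3)
    finally show ?thesis .
  qed
qed (auto simp: Hsp_def)


lemma decomp3:
  assumes "length y = Suc (Suc (Suc n))"
  obtains x0 a w d where "y = x0 # a # w @ [d]" "length w = n"
proof -
  obtain x0 y1 where y1: "y = x0 # y1" "length y1 = Suc (Suc n)" using assms by (cases y) auto
  obtain a y2 where y2: "y1 = a # y2" "length y2 = Suc n" using y1 by (cases y1) auto
  have "y2 = butlast y2 @ [last y2]" using y2 by (metis append_butlast_last_id list.size(3) nat.distinct(1))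
  thus ?thesis using that y1 y2 by (metis length_butlast diff_Suc_1)
qed

lemma K5b:
  fixes n :: nat
  assumes U3: "\<And>i j. (\<Sum>b\<in>UNIV. cnj (u b i) * u b j) = (if i = j then 1 else 0)"
  defines "k \<equiv> Suc (Suc (Suc n))"
  shows "app k (Pj False) (app k (kadj (Ubar u)) (app k (kadj (Ubar u)) (app k sigma (app k (Ubar u) (app k (Pj True) g))))) = (\<lambda>y. 0)"
proof (rule Hsp_eqI[where k=k])
  fix y :: "bool list" assume y: "length y = k"
  show "app k (Pj False) (app k (kadj (Ubar u)) (app k (kadj (Ubar u)) (app k sigma (app k (Ubar u) (app k (Pj True) g))))) y = 0"
  proof (cases "hd y")
    case True thus ?thesis using y by (simp add: P_pt)
  next
    case False
    obtain x0 a w d where yv: "y = x0 # a # w @ [d]" and lv: "length w = n"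
      using y unfolding k_def by (rule decomp3)
    have x0: "x0 = False" using False yv by simp
    have "app k (Pj False) (app k (kadj (Ubar u)) (app k (kadj (Ubar u)) (app k sigma (app k (Ubar u) (app k (Pj True) g))))) y
      = (\<Sum>c\<in>UNIV. cnj (u c False) * (\<Sum>b\<in>UNIV. cnj (u b a) * (\<Sum>e\<in>UNIV. u c e * (if e then g (e # w @ [d, b]) else 0))))"
      using lv unfolding yv x0 k_def by (simp add: P_pt B_pt S_pt A_pt butlast_append)
    also have "\<dots> = (\<Sum>c\<in>UNIV. cnj (u c False) * u c True) * (\<Sum>b\<in>UNIV. cnj (u b a) * g (True # w @ [d, b]))"
      by (simp add: bool_sum algebra_simps)
    also have "\<dots> = 0" by (simp add: U3)
    finally show ?thesis .
  qed
qed (auto simp: Hsp_def)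


lemma Hsp_add: "f \<in> Hsp k \<Longrightarrow> g \<in> Hsp k \<Longrightarrow> (\<lambda>y. f y + g y) \<in> Hsp k"
  by (simp add: Hsp_def)
lemma Hsp_scale: "f \<in> Hsp k \<Longrightarrow> (\<lambda>y. c * f y) \<in> Hsp k"
  by (simp add: Hsp_def)

lemma exp_cnj1: "cnj (exp (\<i> * of_real t)) * exp (\<i> * of_real t) = 1"
  unfolding cis_conv_exp[symmetric] by (simp add: cis_cnj cis_mult)

lemma Htower_iff: "p \<in> Htower k u \<longleftrightarrow> fst p \<in> Hsp k \<and> (\<exists>\<psi>\<in>Hsp k. snd p = app k (Pj' k u True) \<psi>)"
  by (cases p) (simp add: Htower_def)

lemma main:
  fixes k n :: nat and u :: "bool \<Rightarrow> bool \<Rightarrow> complex" and \<theta> :: real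
  assumes kn: "k = Suc (Suc (Suc n))"
    and U2: "\<And>i j. (\<Sum>b\<in>UNIV. u i b * cnj (u j b)) = (if i = j then 1 else 0)"
    and U3: "\<And>i j. (\<Sum>b\<in>UNIV. cnj (u b i) * u b j) = (if i = j then 1 else 0)"
  shows "(\<forall>p\<in>Htower k u. Utower k u \<theta> p \<in> Htower k u) \<and>
    (\<exists>V. (\<forall>p\<in>Htower k u. V p \<in> Htower k u) \<and>
         (\<forall>p\<in>Htower k u. \<forall>q\<in>Htower k u. inner_T k (Utower k u \<theta> p) q = inner_T k p (V q)) \<and>
         (\<forall>p\<in>Htower k u. Utower k u \<theta> (V p) = p \<and> V (Utower k u \<theta> p) = p))"
proof -
  define A where "A = app k (Ubar u)"
  define B where "B = app k (kadj (Ubar u))"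
  define S where "S = app k sigma"
  define P0 where "P0 = app k (Pj False)"
  define P1 where "P1 = app k (Pj True)"
  define Q where "Q = app k (Pj' k u True)"
  define c where "c = exp (\<i> * of_real \<theta>)"
  define H where "H = Hsp k"
  have cc: "cnj c * c = 1" unfolding c_def by (rule exp_cnj1)
  have k2: "k \<ge> 2" using kn by simp
  have Hin: "A f \<in> H" "B f \<in> H" "S f \<in> H" "P0 f \<in> H" "P1 f \<in> H" "Q f \<in> H" for f
    unfolding A_def B_def S_def P0_def P1_def Q_def H_def by simp_all
  have add: "A (\<lambda>y. f y + g y) = (\<lambda>y. A f y + A g y)" "B (\<lambda>y. f y + g y) = (\<lambda>y. B f y + B g y)"
    "S (\<lambda>y. f y + g y) = (\<lambda>y. S f y + S g y)" "P0 (\<lambda>y. f y + g y) = (\<lambda>y. P0 f y + P0 g y)"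
    "P1 (\<lambda>y. f y + g y) = (\<lambda>y. P1 f y + P1 g y)" "Q (\<lambda>y. f y + g y) = (\<lambda>y. Q f y + Q g y)" for f g
    unfolding A_def B_def S_def P0_def P1_def Q_def by (rule app_add)+
  have scale: "A (\<lambda>y. a * f y) = (\<lambda>y. a * A f y)" "B (\<lambda>y. a * f y) = (\<lambda>y. a * B f y)"
    "S (\<lambda>y. a * f y) = (\<lambda>y. a * S f y)" "P0 (\<lambda>y. a * f y) = (\<lambda>y. a * P0 f y)"
    "P1 (\<lambda>y. a * f y) = (\<lambda>y. a * P1 f y)" "Q (\<lambda>y. a * f y) = (\<lambda>y. a * Q f y)" for a f
    unfolding A_def B_def S_def P0_def P1_def Q_def by (rule app_scale)+
  have zero: "A (\<lambda>y. 0) = (\<lambda>y. 0)" "B (\<lambda>y. 0) = (\<lambda>y. 0)" "S (\<lambda>y. 0) = (\<lambda>y. 0)"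
    "P0 (\<lambda>y. 0) = (\<lambda>y. 0)" "P1 (\<lambda>y. 0) = (\<lambda>y. 0)" "Q (\<lambda>y. 0) = (\<lambda>y. 0)"
    unfolding A_def B_def S_def P0_def P1_def Q_def by (rule app_zero)+
  have AB: "f \<in> H \<Longrightarrow> A (B f) = f" for f
    unfolding A_def B_def H_def kn by (rule AB[OF U2])
  have BA: "f \<in> H \<Longrightarrow> B (A f) = f" for f
    unfolding A_def B_def H_def kn by (rule BA[OF U3])
  have SS: "f \<in> H \<Longrightarrow> S (S f) = f" for f
    unfolding S_def H_def using k2 by (rule SS)
  have PP: "P0 (P0 f) = P0 f" "P1 (P1 f) = P1 f" "P0 (P1 f) = (\<lambda>y. 0)" "P1 (P0 f) = (\<lambda>y. 0)" for f
    unfolding P0_def P1_def by (simp_all add: PP)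
  have Psum: "f \<in> H \<Longrightarrow> (\<lambda>y. P0 f y + P1 f y) = f" for f
    unfolding P0_def P1_def H_def by (rule Psum)
  have Qeq: "Q f = A (P1 (B f))" for f
    unfolding Q_def A_def P1_def B_def Pj'_def by (simp add: app_comp)
  have K5a: "P0 (B (S (A (A (P1 g))))) = (\<lambda>y. 0)" for g
    unfolding P0_def B_def S_def A_def P1_def kn by (rule K5a[OF U3])
  have K5b: "P0 (B (B (S (A (P1 g))))) = (\<lambda>y. 0)" for g
    unfolding P0_def B_def S_def A_def P1_def kn by (rule K5b[OF U3])
  have adjA: "inner_H k (A f) g = inner_H k f (B g)" for f g
    unfolding A_def B_def by (rule inner_adj)
  have adjB: "inner_H k (B f) g = inner_H k f (A g)" for f g
    unfolding A_def B_def using inner_adj[of k "kadj (Ubar u)"] by simp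
  have adjS: "inner_H k (S f) g = inner_H k f (S g)" for f g
    unfolding S_def using inner_adj[of k sigma] Sadj[OF k2] by simp
  have adjP0: "inner_H k (P0 f) g = inner_H k f (P0 g)" for f g
    unfolding P0_def using inner_adj[of k "Pj False"] by simp
  have adjP1: "inner_H k (P1 f) g = inner_H k f (P1 g)" for f g
    unfolding P1_def using inner_adj[of k "Pj True"] by simp
  have adjQ: "inner_H k (Q f) g = inner_H k f (Q g)" for f g
    unfolding Qeq by (simp add: adjA adjB adjP1)
  have Qfix: "Q h = h" if "h \<in> H" "P0 (B h) = (\<lambda>y. 0)" for h
  proof -
    have "P1 (B h) = B h" using Psum[OF Hin(2)[of h]] that(2) by simp
    thus ?thesis using Qeq AB that(1) by simp
  qed
  have QQ: "Q (Q f) = Q f" for f using Qeq BA Hin PP by simp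
  have F2: "Q (S (A (Q f))) = S (A (Q f))" for f
    by (rule Qfix) (simp_all add: Hin Qeq K5a)
  have F3: "Q (B (S (Q a))) = B (S (Q a))" for a
    by (rule Qfix) (simp_all add: Hin Qeq K5b)
  have F4: "P1 (B (Q f)) = B (Q f)" "P0 (B (Q f)) = (\<lambda>y. 0)" for f
    using Qeq BA Hin PP by simp_all
  have F5: "Q (A (P0 f)) = (\<lambda>y. 0)" for f using Qeq BA Hin PP zero by simp
  have F6: "Q (A (P1 f)) = A (P1 f)" for f using Qeq BA Hin PP by simp
  have Ueq: "Utower k u \<theta> p = (\<lambda>y. S (A (Q (snd p))) y + A (P0 (fst p)) y, \<lambda>y. c * A (P1 (fst p)) y)" for p
    unfolding Utower_def S_def A_def Q_def P0_def P1_def c_def by simp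
  have Hti: "p \<in> Htower k u \<longleftrightarrow> fst p \<in> H \<and> (\<exists>\<psi>\<in>H. snd p = Q \<psi>)" for p
    unfolding Htower_iff H_def Q_def ..
  define V where "V = (\<lambda>q. ((\<lambda>y. P0 (B (fst q)) y + cnj c * B (snd q) y), B (S (Q (fst q)))))"
  have part1: "Utower k u \<theta> p \<in> Htower k u" if p: "p \<in> Htower k u" for p
  proof -
    have "snd (Utower k u \<theta> p) = Q (\<lambda>y. c * A (P1 (fst p)) y)"
      by (simp add: Ueq scale F6)
    thus ?thesis unfolding Hti by (auto simp: Ueq H_def Hsp_add Hsp_scale Hin[unfolded H_def] intro!: bexI[of _ "\<lambda>y. c * A (P1 (fst p)) y"])
  qed
  have part2: "V q \<in> Htower k u" if "q \<in> Htower k u" for q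
  proof -
    have "snd (V q) = Q (B (S (Q (fst q))))" by (simp add: V_def F3)
    thus ?thesis unfolding Hti by (auto simp: V_def H_def Hsp_add Hsp_scale Hin[unfolded H_def] intro!: bexI[of _ "B (S (Q (fst q)))"])
  qed
  have part3: "inner_T k (Utower k u \<theta> p) q = inner_T k p (V q)"
    if p: "p \<in> Htower k u" and q: "q \<in> Htower k u" for p q
  proof -
    obtain \<phi>0 \<phi>1 where pe: "p = (\<phi>0, \<phi>1)" by (cases p)
    obtain a b where qe: "q = (a, b)" by (cases q)
    obtain \<psi> where \<psi>: "\<phi>1 = Q \<psi>" using p unfolding Hti pe by auto
    obtain \<chi> where \<chi>: "b = Q \<chi>" using q unfolding Hti qe by auto
    have T1: "inner_H k (S (A (Q \<phi>1))) a = inner_H k \<phi>1 (B (S (Q a)))"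
    proof -
      have "inner_H k (S (A (Q \<phi>1))) a = inner_H k (Q (S (A (Q \<phi>1)))) a" by (simp add: F2)
      also have "\<dots> = inner_H k (Q \<phi>1) (B (S (Q a)))" by (simp add: adjQ adjS adjA)
      also have "\<dots> = inner_H k \<phi>1 (Q (B (S (Q a))))" by (simp add: adjQ)
      finally show ?thesis by (simp add: F3)
    qed
    have T2: "inner_H k (A (P0 \<phi>0)) a = inner_H k \<phi>0 (P0 (B a))" by (simp add: adjA adjP0)
    have T3: "inner_H k (A (P1 \<phi>0)) b = inner_H k \<phi>0 (B b)" by (simp add: adjA adjP1 \<chi> F4)
    show ?thesis unfolding pe qe inner_T_def
      by (simp add: Ueq V_def inner_addL inner_addR inner_scaleL inner_scaleR T1 T2 T3)
  qed
  have part4: "Utower k u \<theta> (V q) = q" if q: "q \<in> Htower k u" for q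
  proof -
    obtain a b where qe: "q = (a, b)" by (cases q)
    have a: "a \<in> H" using q unfolding Hti qe by auto
    obtain \<chi> where \<chi>: "b = Q \<chi>" using q unfolding Hti qe by auto
    have bH: "b \<in> H" using \<chi> Hin by simp
    have e1: "S (A (Q (B (S (Q a))))) = Q a" by (simp add: F3 AB Hin SS)
    have e2: "P0 (\<lambda>y. P0 (B a) y + cnj c * B b y) = P0 (B a)"
      by (simp add: add scale PP \<chi> F4)
    have e3: "P1 (\<lambda>y. P0 (B a) y + cnj c * B b y) = (\<lambda>y. cnj c * B b y)"
      by (simp add: add scale PP \<chi> F4)
    have e4: "(\<lambda>y. Q a y + A (P0 (B a)) y) = a"
    proof -
      have "(\<lambda>y. Q a y + A (P0 (B a)) y) = A (\<lambda>y. P0 (B a) y + P1 (B a) y)"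
        by (simp add: Qeq add add.commute)
      also have "\<dots> = a" by (simp add: Psum Hin AB a)
      finally show ?thesis .
    qed
    have e5: "(\<lambda>y. c * A (\<lambda>y. cnj c * B b y) y) = b"
      using cc bH by (simp add: scale AB mult.assoc[symmetric] mult.commute)
    show ?thesis unfolding qe
      by (simp add: Ueq V_def e1 e2 e3 e4 e5)
  qed
  have part5: "V (Utower k u \<theta> p) = p" if p: "p \<in> Htower k u" for p
  proof -
    obtain \<phi>0 \<phi>1 where pe: "p = (\<phi>0, \<phi>1)" by (cases p)
    have p0: "\<phi>0 \<in> H" using p unfolding Hti pe by auto
    obtain \<psi> where \<psi>: "\<phi>1 = Q \<psi>" using p unfolding Hti pe by auto
    have e1: "P0 (B (S (A (Q \<phi>1)))) = (\<lambda>y. 0)" by (simp add: Qeq K5a)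
    have e2: "(\<lambda>y. P0 (B (\<lambda>y. S (A (Q \<phi>1)) y + A (P0 \<phi>0) y)) y + cnj c * B (\<lambda>y. c * A (P1 \<phi>0) y) y) = \<phi>0"
    proof -
      have "(\<lambda>y. P0 (B (\<lambda>y. S (A (Q \<phi>1)) y + A (P0 \<phi>0) y)) y + cnj c * B (\<lambda>y. c * A (P1 \<phi>0) y) y)
          = (\<lambda>y. P0 \<phi>0 y + P1 \<phi>0 y)"
        using cc by (simp add: add scale e1 BA Hin PP mult.assoc[symmetric])
      also have "\<dots> = \<phi>0" using Psum p0 by simp
      finally show ?thesis .
    qed
    have e3: "B (S (Q (\<lambda>y. S (A (Q \<phi>1)) y + A (P0 \<phi>0) y))) = \<phi>1"
      by (simp add: add F2 F5 SS Hin BA \<psi> QQ)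
    show ?thesis unfolding pe by (simp add: Ueq V_def e2 e3)
  qed
  show ?thesis using part1 part2 part3 part4 part5 by blast
qed

theorem proposition6:
  fixes k :: nat and u :: "bool \<Rightarrow> bool \<Rightarrow> complex"
  assumes "k \<ge> 3"
    and "\<And>i j. (\<Sum>b\<in>UNIV. u i b * cnj (u j b)) = (if i = j then 1 else 0)"
    and "\<And>i j. (\<Sum>b\<in>UNIV. cnj (u b i) * u b j) = (if i = j then 1 else 0)"
    and "\<And>i j. cmod (u i j) = 1 / sqrt 2"
  shows "\<forall>\<theta>::real.
    (\<forall>p\<in>Htower k u. Utower k u \<theta> p \<in> Htower k u) \<and>
    (\<exists>V. (\<forall>p\<in>Htower k u. V p \<in> Htower k u) \<and>
         (\<forall>p\<in>Htower k u. \<forall>q\<in>Htower k u. inner_T k (Utower k u \<theta> p) q = inner_T k p (V q)) \<and>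
         (\<forall>p\<in>Htower k u. Utower k u \<theta> (V p) = p \<and> V (Utower k u \<theta> p) = p))"
proof
  fix \<theta> :: real
  have kn: "k = Suc (Suc (Suc (k - 3)))" using assms(1) by simp
  show "(\<forall>p\<in>Htower k u. Utower k u \<theta> p \<in> Htower k u) \<and>
    (\<exists>V. (\<forall>p\<in>Htower k u. V p \<in> Htower k u) \<and>
         (\<forall>p\<in>Htower k u. \<forall>q\<in>Htower k u. inner_T k (Utower k u \<theta> p) q = inner_T k p (V q)) \<and>
         (\<forall>p\<in>Htower k u. Utower k u \<theta> (V p) = p \<and> V (Utower k u \<theta> p) = p))"
    by (rule main[OF kn assms(2) assms(3)])
qed

end
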